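(* Let $G=(V,E)$ be a multigraph with $|V|=s\ge 2$ vertices, and let $v\in V$. Suppose that $\deg(v)\ge 1$ and $\deg(u)\ge 3$ for all $u\in V\setminus\{v\}$. Then $G$ contains a path $(p_1,p_2,\dots,p_k)$ and a cycle $(c_1,c_2,\dots,c_\ell)$ such that $p_1=v$, $p_k=c_1$, $k\ge 1$, $\ell\ge 1$, and $k+\ell\le 4\log(s)$.
   Context: A multigraph is a graph that may contain parallel edges and (possibly parallel) self-loops. The degree of a vertex is the number of incident edges, where a self-loop contributes two to the degree. A path $(p_1,\dots,p_k)$ is a sequence of $k$ distinct vertices with consecutive ones adjacent (a path with $k=1$ is a single vertex). A cycle $(c_1,\dots,c_\ell)$ on $\ell$ vertices: for $\ell=1$ it is a self-loop at $c_1$, for $\ell=2$ it is a pair of parallel edges between $c_1$ and $c_2$, and for $\ell\ge3$ it is an ordinary cycle through distinct vertices $c_1,\dots,c_\ell$. Logarithms are base 2. *)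

theory Defs
  imports Complex_Main
begin

text \<open>Parallel edges are distinct identifiers with the same endpoints.\<close>

definition multigraph :: "'v set \<Rightarrow> 'e set \<Rightarrow> ('e \<Rightarrow> 'v \<times> 'v) \<Rightarrow> bool" where
  "multigraph V E ends \<longleftrightarrow> finite V \<and> finite E \<and>
     (\<forall>e\<in>E. fst (ends e) \<in> V \<and> snd (ends e) \<in> V)"

text \<open>Degree: number of edge-endpoint incidences; a self-loop counts twice.\<close>
definition degree :: "'e set \<Rightarrow> ('e \<Rightarrow> 'v \<times> 'v) \<Rightarrow> 'v \<Rightarrow> nat" where
  "degree E ends v = card {e\<in>E. fst (ends e) = v} + card {e\<in>E. snd (ends e) = v}"

definition joins :: "('e \<Rightarrow> 'v \<times> 'v) \<Rightarrow> 'e \<Rightarrow> 'v \<Rightarrow> 'v \<Rightarrow> bool" where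
  "joins ends e x y \<longleftrightarrow> ends e = (x, y) \<or> ends e = (y, x)"

definition adjacent :: "'e set \<Rightarrow> ('e \<Rightarrow> 'v \<times> 'v) \<Rightarrow> 'v \<Rightarrow> 'v \<Rightarrow> bool" where
  "adjacent E ends x y \<longleftrightarrow> (\<exists>e\<in>E. joins ends e x y)"

definition is_path :: "'v set \<Rightarrow> 'e set \<Rightarrow> ('e \<Rightarrow> 'v \<times> 'v) \<Rightarrow> 'v list \<Rightarrow> bool" where
  "is_path V E ends ps \<longleftrightarrow> ps \<noteq> [] \<and> set ps \<subseteq> V \<and> distinct ps \<and>
     (\<forall>i. Suc i < length ps \<longrightarrow> adjacent E ends (ps ! i) (ps ! Suc i))"

definition is_cycle :: "'v set \<Rightarrow> 'e set \<Rightarrow> ('e \<Rightarrow> 'v \<times> 'v) \<Rightarrow> 'v list \<Rightarrow> bool" where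
  "is_cycle V E ends cs \<longleftrightarrow> set cs \<subseteq> V \<and> distinct cs \<and>
     (case cs of
        [] \<Rightarrow> False
      | [c] \<Rightarrow> (\<exists>e\<in>E. ends e = (c, c))
      | [c1, c2] \<Rightarrow> (\<exists>e1\<in>E. \<exists>e2\<in>E. e1 \<noteq> e2 \<and> joins ends e1 c1 c2 \<and> joins ends e2 c1 c2)
      | _ \<Rightarrow> (\<forall>i < length cs. adjacent E ends (cs ! i) (cs ! ((Suc i) mod length cs))))"

end

theory Submission
  imports Defs
begin

lemma succ_drop: "successively P xs \<Longrightarrow> successively P (drop p xs)"
  by (auto simp: successively_conv_nth)

lemma succ_take: "successively P xs \<Longrightarrow> successively P (take p xs)"
  by (auto simp: successively_conv_nth)

lemma succ_cyc:
  assumes "successively P xs" "xs \<noteq> []" "P (last xs) (hd xs)"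
  shows "\<forall>i < length xs. P (xs ! i) (xs ! (Suc i mod length xs))"
proof (intro allI impI)
  fix i assume i: "i < length xs"
  show "P (xs ! i) (xs ! (Suc i mod length xs))"
  proof (cases "Suc i < length xs")
    case True thus ?thesis using assms(1) by (simp add: successively_nth)
  next
    case False
    hence "i = length xs - 1" using i by simp
    thus ?thesis using assms(2,3) i False by (simp add: last_conv_nth hd_conv_nth)
  qed
qed

lemma joins_sym: "joins ends e x y = joins ends e y x"
  by (auto simp: joins_def)

lemma adjacent_sym: "adjacent E ends x y = adjacent E ends y x"
  by (auto simp: adjacent_def joins_sym)

definition rv :: "'e \<times> bool \<Rightarrow> 'e \<times> bool" where "rv d = (fst d, \<not> snd d)"

locale lolli =
  fixes V :: "'v set" and E :: "'e set" and ends :: "'e \<Rightarrow> 'v \<times> 'v" and v :: 'v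
  assumes mg: "multigraph V E ends" and vV: "v \<in> V"
begin

definition tl_d :: "'e \<times> bool \<Rightarrow> 'v" where
  "tl_d d = (if snd d then fst (ends (fst d)) else snd (ends (fst d)))"
definition hd_d :: "'e \<times> bool \<Rightarrow> 'v" where
  "hd_d d = (if snd d then snd (ends (fst d)) else fst (ends (fst d)))"
definition R where "R d d' \<longleftrightarrow> tl_d d = hd_d d' \<and> d \<noteq> rv d'"
definition nbw where "nbw w \<longleftrightarrow> set w \<subseteq> E \<times> UNIV \<and> successively R w \<and> (w \<noteq> [] \<longrightarrow> tl_d (last w) = v)"
definition endp where "endp w = (if w = [] then v else hd_d (hd w))"
definition verts where "verts w = map hd_d w @ [v]"
definition lol :: "nat \<Rightarrow> bool" where
  "lol N \<longleftrightarrow> (\<exists>ps cs. is_path V E ends ps \<and> is_cycle V E ends cs \<and>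
           hd ps = v \<and> last ps = hd cs \<and> length ps \<ge> 1 \<and> length cs \<ge> 1 \<and>
           length ps + length cs \<le> N)"

lemma tl_rv[simp]: "tl_d (rv d) = hd_d d" and hd_rv[simp]: "hd_d (rv d) = tl_d d"
  and rv_rv[simp]: "rv (rv d) = d" and fst_rv[simp]: "fst (rv d) = fst d"
  by (auto simp: tl_d_def hd_d_def rv_def)

lemma dart_joins: "joins ends (fst d) (tl_d d) (hd_d d)"
  by (cases "ends (fst d)") (auto simp: joins_def tl_d_def hd_d_def)

lemma dart_adj: "fst d \<in> E \<Longrightarrow> adjacent E ends (tl_d d) (hd_d d)"
  unfolding adjacent_def using dart_joins[of d] by (rule bexI)

lemma hd_d_V: "fst d \<in> E \<Longrightarrow> hd_d d \<in> V" and tl_d_V: "fst d \<in> E \<Longrightarrow> tl_d d \<in> V"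
  using mg by (auto simp: multigraph_def hd_d_def tl_d_def)

lemma nbw_Cons: "nbw (d # u) \<Longrightarrow> nbw u \<and> fst d \<in> E \<and> tl_d d = endp u \<and> (u \<noteq> [] \<longrightarrow> d \<noteq> rv (hd u))"
  by (cases u) (auto simp: nbw_def endp_def R_def)

lemma verts_set: "nbw w \<Longrightarrow> set (verts w) \<subseteq> V"
  using vV hd_d_V by (auto simp: nbw_def verts_def)

lemma verts_succ: assumes "nbw w" shows "successively (adjacent E ends) (verts w)"
proof -
  have E: "fst x \<in> E" if "x \<in> set w" for x using assms that by (auto simp: nbw_def)
  have 1: "successively (\<lambda>x y. adjacent E ends (hd_d x) (hd_d y)) w"
    using assms unfolding nbw_def
    by (elim conjE, erule_tac successively_mono) (metis E R_def adjacent_sym dart_adj)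
  have 2: "w \<noteq> [] \<Longrightarrow> adjacent E ends (hd_d (last w)) v"
    using assms E[of "last w"] unfolding nbw_def by (metis adjacent_sym dart_adj last_in_set)
  show ?thesis using 1 2 unfolding verts_def
    by (cases "w = []") (auto simp: successively_append_iff successively_map last_map)
qed

lemma endp_verts: "hd (verts w) = endp w" "last (verts w) = v" "length (verts w) = Suc (length w)"
  by (auto simp: verts_def endp_def hd_map)

lemma not_distinct_hd_last: "length xs \<ge> 2 \<Longrightarrow> hd xs = last xs \<Longrightarrow> \<not> distinct xs"
  by (cases xs) (auto split: if_splits)

lemma lol_mono: "lol N \<Longrightarrow> N \<le> M \<Longrightarrow> lol M"
  unfolding lol_def using le_trans by blast

lemma path_intro:
  assumes "ps \<noteq> []" "set ps \<subseteq> V" "distinct ps" "successively (adjacent E ends) ps"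
  shows "is_path V E ends ps"
  using assms by (simp add: is_path_def successively_conv_nth)

lemma succ_rev_adj: "successively (adjacent E ends) xs \<Longrightarrow> successively (adjacent E ends) (rev xs)"
  by (simp add: successively_rev adjacent_sym[of E ends _ _] cong: successively_cong)

lemma L1: "nbw w \<Longrightarrow> \<not> distinct (verts w) \<Longrightarrow> lol (Suc (length w))"
proof (induction w)
  case Nil thus ?case by (simp add: verts_def)
next
  case (Cons d u)
  from nbw_Cons[OF Cons.prems(1)] have nu: "nbw u" and dE: "fst d \<in> E" and td: "tl_d d = endp u"
    and nrv: "u \<noteq> [] \<longrightarrow> d \<noteq> rv (hd u)" by auto
  show ?case
  proof (cases "distinct (verts u)")
    case False
    from Cons.IH[OF nu False] show ?thesis by (rule lol_mono) simp
  next
    case True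
    define ys where "ys = verts u"
    have vw: "verts (d # u) = hd_d d # ys" by (simp add: ys_def verts_def)
    with Cons.prems(2) True have "hd_d d \<in> set ys" by (simp add: ys_def)
    then obtain p where p: "p < length ys" "ys ! p = hd_d d" by (auto simp: in_set_conv_nth)
    have dys: "distinct ys" using True ys_def by simp
    have sys: "successively (adjacent E ends) ys" using verts_succ[OF nu] ys_def by simp
    have Vys: "set ys \<subseteq> V" using verts_set[OF nu] ys_def by simp
    have ys0: "ys ! 0 = endp u" using endp_verts(1)[of u] ys_def
      by (metis hd_conv_nth list.size(3) not_less0 p(1))
    have ysl: "last ys = v" "length ys = Suc (length u)" using endp_verts ys_def by auto
    define ps where "ps = rev (drop p ys)"
    define cs where "cs = rev (take (Suc p) ys)"
    have sd: "successively (adjacent E ends) (rev (drop p ys))"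
      by (intro succ_rev_adj succ_drop sys)
    have P: "is_path V E ends ps" unfolding ps_def
      using p dys Vys set_drop_subset[of p ys] by (intro path_intro[OF _ _ _ sd]) auto
    have hps: "hd ps = v" "last ps = hd_d d" using p ysl
      by (auto simp: ps_def hd_rev last_rev hd_drop_conv_nth)
    have hcs: "hd cs = hd_d d" using p by (simp add: cs_def hd_rev take_Suc_conv_app_nth)
    have lens: "length ps + length cs = Suc (Suc (length u))" using p ysl
      by (simp add: ps_def cs_def)
    have csV: "set cs \<subseteq> V" "distinct cs" using Vys dys set_take_subset[of "Suc p" ys]
      by (auto simp: cs_def)
    have C: "is_cycle V E ends cs"
    proof (cases p)
      case 0
      hence cs: "cs = [endp u]" using p ys0 by (simp add: cs_def take_Suc_conv_app_nth)
      have "hd_d d = tl_d d" using p 0 ys0 td by simp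
      hence "ends (fst d) = (tl_d d, tl_d d)"
        by (cases "ends (fst d)") (auto simp: tl_d_def hd_d_def split: if_splits)
      thus ?thesis using csV cs dE td by (auto simp: is_cycle_def)
    next
      case (Suc q)
      show ?thesis
      proof (cases q)
        case 0
        with Suc have p1: "p = 1" by simp
        then obtain d' u' where u: "u = d' # u'" using p ysl by (cases u) auto
        have nu': "tl_d d' = endp u'" "fst d' \<in> E" using nbw_Cons[of d' u'] nu u by auto
        have ys01: "ys ! 0 = hd_d d'" "ys ! 1 = tl_d d'"
          using nu' by (auto simp: ys_def u verts_def endp_def nth_append hd_conv_nth split: if_splits)
        have cs: "cs = [tl_d d', hd_d d']" using p p1 ys01
          by (cases ys; cases "tl ys") (auto simp: cs_def)
        have neq: "tl_d d' \<noteq> hd_d d'" using csV cs by simp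
        have tdd: "tl_d d = hd_d d'" "hd_d d = tl_d d'" using td u p p1 ys01 by (auto simp: endp_def)
        have "fst d \<noteq> fst d'"
        proof
          assume eq: "fst d = fst d'"
          have "d \<noteq> rv d'" using nrv u by simp
          hence "d = d'" using eq by (cases d; cases d') (auto simp: rv_def)
          thus False using tdd neq by simp
        qed
        moreover have "joins ends (fst d') (tl_d d') (hd_d d')" by (rule dart_joins)
        moreover have "joins ends (fst d) (tl_d d') (hd_d d')"
          using dart_joins[of d] tdd joins_sym by metis
        ultimately show ?thesis using csV cs dE nu' by (auto simp: is_cycle_def)
      next
        case (Suc r)
        with \<open>p = Suc q\<close> have p2: "p \<ge> 2" by simp
        have lc: "length cs \<ge> 3" using p p2 by (simp add: cs_def)
        have sc: "successively (adjacent E ends) cs" unfolding cs_def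
          by (intro succ_rev_adj succ_take sys)
        have lcs: "last cs = tl_d d" using ys0 td p by (cases ys) (auto simp: cs_def last_rev)
        have cyc: "\<forall>i < length cs. adjacent E ends (cs ! i) (cs ! (Suc i mod length cs))"
          apply (rule succ_cyc[OF sc])
          using lc lcs hcs dart_adj[OF dE] by auto
        obtain a b c rest where "cs = a # b # c # rest" using lc
          by (metis Suc_le_length_iff numeral_3_eq_3)
        thus ?thesis using csV cyc by (simp add: is_cycle_def)
      qed
    qed
    show ?thesis unfolding lol_def
      apply (rule exI[where x=ps], rule exI[where x=cs])
      using P C hps hcs lens p by (auto simp: is_path_def cs_def Suc_le_eq)
  qed
qed

lemma endp_Nil: "endp [] = v" by (simp add: endp_def)

lemma closed_nd: "nbw w \<Longrightarrow> w \<noteq> [] \<Longrightarrow> endp w = v \<Longrightarrow> \<not> distinct (verts w)"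
  using endp_verts[of w] by (intro not_distinct_hd_last) (auto simp: Suc_le_eq)

lemma rv_inj: "rv x = rv y \<longleftrightarrow> x = y"
  unfolding rv_def by (cases x; cases y) auto

lemma L2: "nbw w1 \<Longrightarrow> nbw w2 \<Longrightarrow> w1 \<noteq> w2 \<Longrightarrow> endp w1 = endp w2 \<Longrightarrow>
  \<exists>w. nbw w \<and> \<not> distinct (verts w) \<and> length w \<le> length w1 + length w2"
proof (induction w1 arbitrary: w2)
  case Nil
  have "endp w2 = v" "w2 \<noteq> []" using Nil.prems endp_Nil by metis+
  thus ?case using closed_nd[of w2] Nil.prems by auto
next
  case (Cons d1 u1)
  show ?case
  proof (cases w2)
    case Nil
    have "endp (d1 # u1) = v" using Cons.prems Nil endp_Nil by metis
    thus ?thesis using Cons.prems closed_nd[of "d1 # u1"] by auto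
  next
    case (Cons d2 u2)
    note w2 = this
    have n1: "nbw u1" "tl_d d1 = endp u1" and n2: "nbw u2" "tl_d d2 = endp u2"
      using nbw_Cons Cons.prems w2 by blast+
    show ?thesis
    proof (cases "d1 = d2")
      case True
      hence "u1 \<noteq> u2" "endp u1 = endp u2" using Cons.prems w2 n1 n2 by auto
      from Cons.IH[OF n1(1) n2(1) this] show ?thesis using w2 by fastforce
    next
      case False
      define w where "w = map rv (rev w2) @ (d1 # u1)"
      have s2: "successively R w2" "set w2 \<subseteq> E \<times> UNIV" using Cons.prems(2) by (auto simp: nbw_def)
      have s1: "successively R (d1 # u1)" "set (d1 # u1) \<subseteq> E \<times> UNIV" "tl_d (last (d1 # u1)) = v"
        using Cons.prems(1) by (auto simp: nbw_def)
      have "successively (\<lambda>x y. R (rv y) (rv x)) w2"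
        using s2(1) by (rule successively_mono) (auto simp: R_def rv_inj)
      hence sm: "successively R (map rv (rev w2))" by (simp add: successively_map)
      have junc: "R (rv d2) d1" using False Cons.prems(4) w2 by (auto simp: R_def endp_def rv_inj)
      have st: "set (map rv (rev w2)) \<subseteq> E \<times> UNIV" using s2(2) by (auto simp: rv_def)
      have lst: "last (map rv (rev w2)) = rv d2" using w2 by (simp add: last_map last_rev)
      have "successively R w" unfolding w_def using sm s1(1) junc lst w2
        by (subst successively_append_iff) auto
      moreover have "set w \<subseteq> E \<times> UNIV" using st s1(2) by (simp add: w_def)
      moreover have "tl_d (last w) = v" using s1(3) by (simp add: w_def)
      ultimately have nw: "nbw w" by (simp add: nbw_def)
      have "endp w = v" using Cons.prems(2) w2
        by (auto simp: w_def endp_def nbw_def hd_map hd_rev)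
      hence "\<not> distinct (verts w)" using closed_nd[OF nw] by (simp add: w_def)
      thus ?thesis using nw w2 by (intro exI[of _ w]) (auto simp: w_def)
    qed
  qed
qed

definition W where "W j = {w. nbw w \<and> length w = j}"
definition darts where "darts x = {d \<in> E \<times> UNIV. tl_d d = x}"
definition ext where "ext w = {d \<in> darts (endp w). w \<noteq> [] \<longrightarrow> d \<noteq> rv (hd w)}"

lemma finE: "finite E" using mg by (simp add: multigraph_def)

lemma finW: "finite (W j)"
proof -
  have "finite (E \<times> (UNIV :: bool set))" using finE by simp
  hence "finite {w. set w \<subseteq> E \<times> (UNIV :: bool set) \<and> length w = j}"
    by (rule finite_lists_length_eq)
  thus ?thesis by (rule finite_subset[rotated]) (auto simp: W_def nbw_def)
qed

lemma card_darts: "card (darts x) = degree E ends x"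
proof -
  have eq: "darts x = (\<lambda>e. (e, True)) ` {e\<in>E. fst (ends e) = x} \<union> (\<lambda>e. (e, False)) ` {e\<in>E. snd (ends e) = x}"
    unfolding darts_def tl_d_def by (auto split: if_splits)
  have f1: "finite {e\<in>E. fst (ends e) = x}" "finite {e\<in>E. snd (ends e) = x}" using finE by auto
  show ?thesis unfolding eq degree_def
    by (subst card_Un_disjoint) (use f1 in \<open>auto simp: card_image inj_on_def\<close>)
qed

lemma finite_darts: "finite (darts x)"
proof -
  have "finite (E \<times> (UNIV :: bool set))" using finE by simp
  thus ?thesis unfolding darts_def by (rule finite_subset[rotated]) auto
qed

lemma W0: "W 0 = {[]}" by (auto simp: W_def nbw_def)

lemma W_step: "card (W (Suc j)) \<ge> (\<Sum>w\<in>W j. card (ext w))"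
proof -
  have sub: "(\<lambda>(w, d). d # w) ` Sigma (W j) ext \<subseteq> W (Suc j)"
  proof clarify
    fix w d assume w: "w \<in> W j" and d: "d \<in> ext w"
    have nw: "nbw w" "length w = j" using w by (auto simp: W_def)
    have dd: "d \<in> E \<times> UNIV" "tl_d d = endp w" "w \<noteq> [] \<Longrightarrow> d \<noteq> rv (hd w)"
      using d by (auto simp: ext_def darts_def)
    have "nbw (d # w)"
    proof (cases w)
      case Nil thus ?thesis using dd by (auto simp: nbw_def endp_def)
    next
      case (Cons a u)
      thus ?thesis using dd nw(1) by (auto simp: nbw_def endp_def R_def)
    qed
    thus "d # w \<in> W (Suc j)" using nw by (simp add: W_def)
  qed
  have inj: "inj_on (\<lambda>(w, d). d # w) (Sigma (W j) ext)" by (auto simp: inj_on_def)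
  have fs: "finite (Sigma (W j) ext)" using finW finite_darts
    by (intro finite_SigmaI) (auto simp: ext_def)
  have "card (Sigma (W j) ext) = (\<Sum>w\<in>W j. card (ext w))"
    using finW finite_darts by (intro card_SigmaI) (auto simp: ext_def)
  moreover have "card (Sigma (W j) ext) \<le> card (W (Suc j))"
    using card_inj_on_le[OF inj sub finW] .
  ultimately show ?thesis by simp
qed

lemma K:
  assumes dv: "degree E ends v \<ge> 1" and du: "\<forall>u \<in> V - {v}. degree E ends u \<ge> 3"
  shows "(\<forall>w. nbw w \<longrightarrow> length w \<le> j \<longrightarrow> distinct (verts w)) \<Longrightarrow> card (W (Suc j)) \<ge> 2 ^ j"
proof (induction j)
  case 0
  have "ext [] = darts v" by (simp add: ext_def endp_def)
  hence "card (ext []) \<ge> 1" using dv card_darts by simp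
  thus ?case using W_step[of 0] by (simp add: W0)
next
  case (Suc i)
  have IH: "card (W (Suc i)) \<ge> 2 ^ i" using Suc.prems by (intro Suc.IH) auto
  have c2: "card (ext w) \<ge> 2" if w: "w \<in> W (Suc i)" for w
  proof -
    have nw: "nbw w" "length w = Suc i" using w by (auto simp: W_def)
    then obtain a u where wa: "w = a # u" by (cases w) auto
    have aE: "fst a \<in> E" using nw wa by (auto simp: nbw_def)
    have x: "endp w = hd_d a" using wa by (simp add: endp_def)
    have dis: "distinct (verts w)" using Suc.prems nw by auto
    have "hd_d a \<noteq> v"
    proof
      assume "hd_d a = v"
      hence "\<not> distinct (verts w)" using closed_nd[OF nw(1)] wa x by simp
      thus False using dis by simp
    qed
    hence dx: "degree E ends (hd_d a) \<ge> 3" using du hd_d_V[OF aE] by auto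
    have "ext w = darts (hd_d a) - {rv a}" using wa x by (auto simp: ext_def)
    moreover have "rv a \<in> darts (hd_d a)" using aE by (auto simp: darts_def mem_Times_iff)
    ultimately have "card (ext w) = degree E ends (hd_d a) - 1"
      using card_darts finite_darts by (simp add: card_Diff_singleton)
    thus ?thesis using dx by simp
  qed
  have "(\<Sum>w\<in>W (Suc i). card (ext w)) \<ge> (\<Sum>w\<in>W (Suc i). 2)"
    by (rule sum_mono) (use c2 in auto)
  hence "card (W (Suc (Suc i))) \<ge> 2 * card (W (Suc i))" using W_step[of "Suc i"] by simp
  thus ?case using IH by simp
qed

lemma short_or: "(\<exists>w. nbw w \<and> length w \<le> j \<and> \<not> distinct (verts w)) \<Longrightarrow> lol (Suc j)"
  using L1 lol_mono by (metis Suc_le_mono)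

lemma main:
  assumes s2: "card V \<ge> 2" and dv: "degree E ends v \<ge> 1" and du: "\<forall>u \<in> V - {v}. degree E ends u \<ge> 3"
  shows "\<exists>N. lol N \<and> real N \<le> 4 * log 2 (real (card V))"
proof -
  define s where "s = card V"
  have finV: "finite V" using mg by (simp add: multigraph_def)
  show ?thesis
  proof (cases "s \<le> 7")
    case True
    define j where "j = s - 1"
    have sj: "Suc j = s" using s2 s_def j_def by simp
    have "lol (Suc s)"
    proof (cases "\<exists>w. nbw w \<and> length w \<le> j \<and> \<not> distinct (verts w)")
      case True
      from short_or[OF this] show ?thesis using sj lol_mono by simp
    next
      case False
      hence "card (W (Suc j)) \<ge> 2 ^ j" using K[OF dv du] by blast
      hence "W (Suc j) \<noteq> {}" by (metis card.empty le_zero_eq power_not_zero zero_neq_numeral)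
      then obtain w where w: "nbw w" "length w = s" using sj by (auto simp: W_def)
      have "\<not> distinct (verts w)"
      proof
        assume d: "distinct (verts w)"
        have "card (set (verts w)) = Suc s" using distinct_card[OF d] endp_verts(3)[of w] w by simp
        moreover have "card (set (verts w)) \<le> s" using card_mono[OF finV verts_set[OF w(1)]] s_def by simp
        ultimately show False by simp
      qed
      from L1[OF w(1) this] show ?thesis using w by simp
    qed
    moreover have "real (Suc s) \<le> 4 * log 2 (real s)"
    proof -
      have a: "1 \<le> log 2 (real s)" using le_log2_of_power[of 1 s] s2 s_def by simp
      show ?thesis
      proof (cases "s \<ge> 4")
        case True
        have "2 \<le> log 2 (real s)" using le_log2_of_power[of 2 s] True by simp
        thus ?thesis using \<open>s \<le> 7\<close> by simp
      next
        case False
        hence "s = 2 \<or> s = 3" using s2 s_def by auto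
        thus ?thesis using a by auto
      qed
    qed
    ultimately show ?thesis using s_def by blast
  next
    case False
    hence s8: "s \<ge> 8" by simp
    obtain m where m: "2 ^ m \<le> s" "s < 2 ^ (m + 1)" using ex_power_ivl1[of 2 s] s8 by auto
    define j where "j = m + 1"
    have "lol (2 * m + 5)"
    proof (cases "\<exists>w. nbw w \<and> length w \<le> j \<and> \<not> distinct (verts w)")
      case True
      from short_or[OF this] show ?thesis using lol_mono j_def by simp
    next
      case False
      hence cW: "card (W (Suc j)) \<ge> 2 ^ j" using K[OF dv du] by blast
      show ?thesis
      proof (cases "\<exists>w \<in> W (Suc j). \<not> distinct (verts w)")
        case True
        then obtain w where "nbw w" "length w = Suc j" "\<not> distinct (verts w)" by (auto simp: W_def)
        from L1[OF this(1,3)] show ?thesis using lol_mono j_def \<open>length w = Suc j\<close> by simp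
      next
        case False
        have "\<not> inj_on endp (W (Suc j))"
        proof
          assume inj: "inj_on endp (W (Suc j))"
          have "endp ` W (Suc j) \<subseteq> V"
          proof
            fix x assume "x \<in> endp ` W (Suc j)"
            then obtain w where "nbw w" "x = endp w" by (auto simp: W_def)
            thus "x \<in> V" using verts_set[of w] endp_verts(1)[of w]
              by (metis hd_in_set list.size(3) nat.distinct(1) endp_verts(3) subsetD)
          qed
          from card_inj_on_le[OF inj this finV] have "card (W (Suc j)) \<le> s" using s_def by simp
          thus False using cW m(2) j_def by simp
        qed
        then obtain w1 w2 where "w1 \<in> W (Suc j)" "w2 \<in> W (Suc j)" "w1 \<noteq> w2" "endp w1 = endp w2"
          unfolding inj_on_def by blast
        hence "nbw w1" "nbw w2" "length w1 = Suc j" "length w2 = Suc j" "w1 \<noteq> w2" "endp w1 = endp w2"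
          by (auto simp: W_def)
        from L2[OF this(1,2,5,6)] obtain w where "nbw w" "\<not> distinct (verts w)"
          "length w \<le> 2 * Suc j" using \<open>length w1 = Suc j\<close> \<open>length w2 = Suc j\<close> by auto
        from L1[OF this(1,2)] show ?thesis using lol_mono j_def \<open>length w \<le> 2 * Suc j\<close> by simp
      qed
    qed
    moreover have "real (2 * m + 5) \<le> 4 * log 2 (real s)"
    proof -
      have "real m \<le> log 2 (real s)" using le_log2_of_power[OF m(1)] .
      moreover have "3 \<le> log 2 (real s)" using le_log2_of_power[of 3 s] s8 by simp
      ultimately show ?thesis by simp
    qed
    ultimately show ?thesis using s_def by blast
  qed
qed

end

theorem claim2p1:
  fixes V :: "'v set" and E :: "'e set" and ends :: "'e \<Rightarrow> 'v \<times> 'v" and v :: 'v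
  assumes "multigraph V E ends"
    and "card V \<ge> 2"
    and "v \<in> V"
    and "degree E ends v \<ge> 1"
    and "\<forall>u \<in> V - {v}. degree E ends u \<ge> 3"
  shows "\<exists>ps cs. is_path V E ends ps \<and> is_cycle V E ends cs \<and>
           hd ps = v \<and> last ps = hd cs \<and> length ps \<ge> 1 \<and> length cs \<ge> 1 \<and>
           real (length ps + length cs) \<le> 4 * log 2 (real (card V))"
proof -
  interpret lolli V E ends v using assms(1,3) by unfold_locales
  obtain N where N: "lol N" "real N \<le> 4 * log 2 (real (card V))" using main assms(2,4,5) by blast
  then obtain ps cs where P: "is_path V E ends ps" "is_cycle V E ends cs"
      "hd ps = v" "last ps = hd cs" "length ps \<ge> 1" "length cs \<ge> 1"
      and len: "length ps + length cs \<le> N" unfolding lol_def by blast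
  have "real (length ps + length cs) \<le> real N" using len by (simp only: of_nat_le_iff)
  hence r: "real (length ps + length cs) \<le> 4 * log 2 (real (card V))" using N(2) by (rule order_trans)
  show ?thesis
    apply (rule exI[of _ ps], rule exI[of _ cs])
    using P r by blast
qed

end
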